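(* Consider $\mathbb{C}$ as a Frobenius algebra over $\mathbb{R}$ with the usual multiplication and unit, comultiplication determined by $\Delta(1)=1\otimes 1-i\otimes i$ (and $\Delta(a)=(a\otimes 1)\Delta(1)$), and counit $\varepsilon(1)=1$, $\varepsilon(i)=0$. Then the extended structures on this Frobenius algebra are exactly: (a) $\phi=\mathrm{id}_{\mathbb{C}}$ and $\theta=\pm\sqrt2$; (b) $\phi(z)=\overline z$ (complex conjugation) and $\theta=0$. Moreover, these three extended Frobenius algebras are pairwise non-isomorphic.
   Context: A Frobenius algebra over a field $K$ is a tuple $(A,m,u,\Delta,\varepsilon)$ where $(A,m,u)$ is an associative unital $K$-algebra and $(A,\Delta,\varepsilon)$ is a coassociative counital $K$-coalgebra satisfying $(a\otimes 1_A)\Delta(b)=\Delta(ab)=\Delta(a)(1_A\otimes b)$. A morphism of Frobenius algebras is both an algebra and coalgebra morphism. An extended structure on $A$ is a pair $(\phi,\theta)$, $\phi:A\to A$ $K$-linear, $\theta\in A$, with: (i) $\phi$ a Frobenius algebra morphism with $\phi^2=\mathrm{id}_A$; (ii) $\phi(\theta a)=\theta a$ for all $a\in A$; (iii) $m(\phi\otimes\mathrm{id}_A)\Delta(1_A)=\theta^2$. A morphism of extended Frobenius algebras $f:(A,\phi_A,\theta_A)\to(B,\phi_B,\theta_B)$ is a Frobenius algebra morphism with $f\phi_A=\phi_Bf$ and $f(\theta_A)=\theta_B$. *)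

theory Defs
  imports Complex_Main
begin

text \<open>Real basis: bas False = 1, bas True = i.  Elements of the real tensor product
  C (x)_R C are represented by their coordinate arrays with respect to the basis
  bas j (x) bas k, i.e. as functions bool => bool => real.\<close>

definition bas :: "bool \<Rightarrow> complex" where
  "bas b = (if b then \<i> else 1)"

definition coord :: "bool \<Rightarrow> complex \<Rightarrow> real" where
  "coord b z = (if b then Im z else Re z)"

type_synonym ctensor = "bool \<Rightarrow> bool \<Rightarrow> real"

definition tens :: "complex \<Rightarrow> complex \<Rightarrow> ctensor" where
  "tens z w = (\<lambda>j k. coord j z * coord k w)"

definition tmap :: "(complex \<Rightarrow> complex) \<Rightarrow> (complex \<Rightarrow> complex) \<Rightarrow> ctensor \<Rightarrow> ctensor" where
  "tmap f g T = (\<lambda>p q. \<Sum>j\<in>UNIV. \<Sum>k\<in>UNIV. T j k * coord p (f (bas j)) * coord q (g (bas k)))"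

definition tmult :: "ctensor \<Rightarrow> complex" where
  "tmult T = (\<Sum>j\<in>UNIV. \<Sum>k\<in>UNIV. complex_of_real (T j k) * (bas j * bas k))"

definition cDelta :: "complex \<Rightarrow> ctensor" where
  "cDelta a = (\<lambda>j k. tens a 1 j k - tens (a * \<i>) \<i> j k)"

definition ceps :: "complex \<Rightarrow> real" where
  "ceps z = Re z"

definition frob_morph :: "(complex \<Rightarrow> complex) \<Rightarrow> bool" where
  "frob_morph f \<longleftrightarrow> linear f
     \<and> (\<forall>a b. f (a * b) = f a * f b) \<and> f 1 = 1
     \<and> (\<forall>a. cDelta (f a) = tmap f f (cDelta a)) \<and> (\<forall>a. ceps (f a) = ceps a)"

definition ext_structure :: "(complex \<Rightarrow> complex) \<Rightarrow> complex \<Rightarrow> bool" where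
  "ext_structure \<phi> \<theta> \<longleftrightarrow> frob_morph \<phi> \<and> \<phi> \<circ> \<phi> = id
     \<and> (\<forall>a. \<phi> (\<theta> * a) = \<theta> * a)
     \<and> tmult (tmap \<phi> id (cDelta 1)) = \<theta>\<^sup>2"

definition ext_morph :: "(complex \<Rightarrow> complex) \<Rightarrow> (complex \<Rightarrow> complex) \<Rightarrow> complex
    \<Rightarrow> (complex \<Rightarrow> complex) \<Rightarrow> complex \<Rightarrow> bool" where
  "ext_morph f \<phi>A \<theta>A \<phi>B \<theta>B \<longleftrightarrow> frob_morph f \<and> f \<circ> \<phi>A = \<phi>B \<circ> f \<and> f \<theta>A = \<theta>B"

definition ext_iso :: "(complex \<Rightarrow> complex) \<Rightarrow> complex \<Rightarrow> (complex \<Rightarrow> complex) \<Rightarrow> complex \<Rightarrow> bool" where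
  "ext_iso \<phi>A \<theta>A \<phi>B \<theta>B \<longleftrightarrow> (\<exists>f g. ext_morph f \<phi>A \<theta>A \<phi>B \<theta>B \<and> ext_morph g \<phi>B \<theta>B \<phi>A \<theta>A
     \<and> g \<circ> f = id \<and> f \<circ> g = id)"

end

theory Submission
  imports Defs
begin

lemma lin_decomp:
  assumes "linear f"
  shows "f z = Re z *\<^sub>R f 1 + Im z *\<^sub>R f \<i>"
proof -
  have "z = Re z *\<^sub>R 1 + Im z *\<^sub>R \<i>"
    by (simp add: complex_eq_iff)
  hence "f z = f (Re z *\<^sub>R 1 + Im z *\<^sub>R \<i>)" by simp
  also have "\<dots> = Re z *\<^sub>R f 1 + Im z *\<^sub>R f \<i>"
    using assms by (simp add: linear_add linear_scale)
  finally show ?thesis .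
qed

lemma lin_real:
  assumes "linear f" "f 1 = 1"
  shows "f (complex_of_real r) = complex_of_real r"
  using lin_decomp[OF assms(1), of "complex_of_real r"] assms(2)
  by (simp add: scaleR_conv_of_real)

lemma classify:
  assumes "frob_morph f"
  shows "f = id \<or> f = cnj"
proof -
  have lin: "linear f" and mul: "\<And>a b. f (a * b) = f a * f b" and one: "f 1 = 1"
    using assms unfolding frob_morph_def by auto
  have m1: "f (-1) = -1" using lin_real[OF lin one, of "-1"] by simp
  have sq: "f \<i> * f \<i> = -1" using mul[of \<i> \<i>] m1 by simp
  have "(f \<i> - \<i>) * (f \<i> + \<i>) = f \<i> * f \<i> + 1"
    by (simp add: algebra_simps)
  also have "\<dots> = 0" using sq by simp
  finally have "f \<i> = \<i> \<or> f \<i> = -\<i>" by (simp add: eq_neg_iff_add_eq_0)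
  thus ?thesis
  proof
    assume h: "f \<i> = \<i>"
    have "f z = id z" for z
      using lin_decomp[OF lin, of z] one h by (simp add: complex_eq_iff)
    thus ?thesis by auto
  next
    assume h: "f \<i> = -\<i>"
    have "f z = cnj z" for z
      using lin_decomp[OF lin, of z] one h by (simp add: complex_eq_iff)
    thus ?thesis by auto
  qed
qed

lemma sum_bool: "(\<Sum>j\<in>(UNIV::bool set). g j) = g False + g True"
  by (simp add: UNIV_bool)

lemma id_frob: "frob_morph id"
proof -
  have "cDelta a = tmap id id (cDelta a)" for a
  proof -
    have "cDelta a p q = tmap id id (cDelta a) p q" for p q
      by (cases p; cases q; simp add: tmap_def sum_bool cDelta_def tens_def coord_def bas_def)
    thus ?thesis by blast
  qed
  thus ?thesis unfolding frob_morph_def by (simp add: linear_id)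
qed

lemma cnj_frob: "frob_morph cnj"
proof -
  have "cDelta (cnj a) = tmap cnj cnj (cDelta a)" for a
  proof -
    have "cDelta (cnj a) p q = tmap cnj cnj (cDelta a) p q" for p q
      by (cases p; cases q; simp add: tmap_def sum_bool cDelta_def tens_def coord_def bas_def)
    thus ?thesis by blast
  qed
  moreover have "linear cnj"
    by (rule linearI) (simp_all add: complex_eq_iff)
  ultimately show ?thesis unfolding frob_morph_def by (simp add: ceps_def)
qed

lemma tm_id: "tmult (tmap id id (cDelta 1)) = 2"
  by (simp add: tmult_def tmap_def sum_bool cDelta_def tens_def coord_def bas_def)

lemma tm_cnj: "tmult (tmap cnj id (cDelta 1)) = 0"
  by (simp add: tmult_def tmap_def sum_bool cDelta_def tens_def coord_def bas_def)

lemma sq2: "(\<theta>::complex)\<^sup>2 = 2 \<longleftrightarrow> \<theta> = complex_of_real (sqrt 2) \<or> \<theta> = - complex_of_real (sqrt 2)"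
proof -
  have "(complex_of_real (sqrt 2))\<^sup>2 = 2"
    by (metis of_real_numeral of_real_power real_sqrt_pow2 zero_le_numeral)
  hence "\<theta>\<^sup>2 = 2 \<longleftrightarrow> (\<theta> - complex_of_real (sqrt 2)) * (\<theta> + complex_of_real (sqrt 2)) = 0"
    by (simp add: algebra_simps power2_eq_square)
  thus ?thesis by (auto simp: eq_neg_iff_add_eq_0)
qed

lemma no_morph:
  assumes "ext_morph f pA (complex_of_real r) pB t" "t \<noteq> complex_of_real r"
  shows False
  using assms lin_real[of f r] unfolding ext_morph_def frob_morph_def by auto

theorem mainTheorem3:
  shows "(\<forall>\<phi> \<theta>. ext_structure \<phi> \<theta> \<longleftrightarrow>
            (\<phi> = id \<and> (\<theta> = complex_of_real (sqrt 2) \<or> \<theta> = - complex_of_real (sqrt 2)))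
          \<or> (\<phi> = cnj \<and> \<theta> = 0))
    \<and> \<not> ext_iso id (complex_of_real (sqrt 2)) id (- complex_of_real (sqrt 2))
    \<and> \<not> ext_iso id (complex_of_real (sqrt 2)) cnj 0
    \<and> \<not> ext_iso id (- complex_of_real (sqrt 2)) cnj 0"
proof (intro conjI allI)
  fix \<phi> \<theta>
  show "ext_structure \<phi> \<theta> \<longleftrightarrow>
            (\<phi> = id \<and> (\<theta> = complex_of_real (sqrt 2) \<or> \<theta> = - complex_of_real (sqrt 2)))
          \<or> (\<phi> = cnj \<and> \<theta> = 0)"
  proof
    assume e: "ext_structure \<phi> \<theta>"
    hence "\<phi> = id \<or> \<phi> = cnj" using classify unfolding ext_structure_def by auto
    thus "(\<phi> = id \<and> (\<theta> = complex_of_real (sqrt 2) \<or> \<theta> = - complex_of_real (sqrt 2)))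
          \<or> (\<phi> = cnj \<and> \<theta> = 0)"
      using e tm_id tm_cnj sq2 unfolding ext_structure_def by auto
  next
    assume "(\<phi> = id \<and> (\<theta> = complex_of_real (sqrt 2) \<or> \<theta> = - complex_of_real (sqrt 2)))
          \<or> (\<phi> = cnj \<and> \<theta> = 0)"
    thus "ext_structure \<phi> \<theta>"
    proof
      assume "\<phi> = id \<and> (\<theta> = complex_of_real (sqrt 2) \<or> \<theta> = - complex_of_real (sqrt 2))"
      thus ?thesis unfolding ext_structure_def using id_frob tm_id sq2[of \<theta>] by simp
    next
      assume "\<phi> = cnj \<and> \<theta> = 0"
      hence "\<phi> = cnj" "\<theta> = 0" by auto
      moreover have "cnj \<circ> cnj = id" by (simp add: fun_eq_iff)
      ultimately show ?thesis unfolding ext_structure_def using cnj_frob tm_cnj by simp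
    qed
  qed
next
  show "\<not> ext_iso id (complex_of_real (sqrt 2)) id (- complex_of_real (sqrt 2))"
    unfolding ext_iso_def using no_morph[of _ id "sqrt 2" id "- complex_of_real (sqrt 2)"]
    by auto
next
  show "\<not> ext_iso id (complex_of_real (sqrt 2)) cnj 0"
    unfolding ext_iso_def using no_morph[of _ id "sqrt 2" cnj 0] by auto
next
  show "\<not> ext_iso id (- complex_of_real (sqrt 2)) cnj 0"
    unfolding ext_iso_def using no_morph[of _ id "- sqrt 2" cnj 0] by auto
qed

end
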